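(* Let $q > 1$ be an integer. For all positive integers $n$ and $M$, $$|C(n,q,M+1)| \geq q\cdot|C(n,q,M)|.$$
   Context: Fix the alphabet $\{x_0,\ldots,x_{q-1}\}$ of $q$ letters. A word $W$ is an instance of a word $V = y_0y_1\cdots y_{m-1}$ (each $y_i$ a letter) if $W = A_0A_1\cdots A_{m-1}$ with each $A_i$ a nonempty word and $A_i = A_j$ whenever $y_i = y_j$. The Zimin words are defined by $Z_0 := \varepsilon$ (the empty word) and $Z_{n+1} := Z_n z_n Z_n$ for distinct letters $z_0,z_1,\dots$ (so $Z_1 = a$, $Z_2 = aba$, $Z_3=abacaba$). $C(n,q,M)$ denotes the set of words $W \in \{x_0,\ldots,x_{q-1}\}^M$ that are instances of $Z_n$. *)

theory Defs
  imports Main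
begin

text \<open>Words over the alphabet {x_0,...,x_(q-1)} are lists of naturals with entries < q.
  Patterns (such as Zimin words) are lists over an arbitrary letter type.\<close>

definition is_instance :: "'b list \<Rightarrow> 'a list \<Rightarrow> bool" where
  "is_instance W V \<longleftrightarrow>
     (\<exists>f :: 'a \<Rightarrow> 'b list. (\<forall>y \<in> set V. f y \<noteq> []) \<and> W = concat (map f V))"

fun zimin :: "nat \<Rightarrow> nat list" where
  "zimin 0 = []"
| "zimin (Suc n) = zimin n @ [n] @ zimin n"

definition C :: "nat \<Rightarrow> nat \<Rightarrow> nat \<Rightarrow> nat list set" where
  "C n q M = {W. length W = M \<and> set W \<subseteq> {..<q} \<and> is_instance W (zimin n)}"

end

theory Submission
  imports Defs
begin

lemma zimin_set: "set (zimin k) \<subseteq> {..<k}"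
  by (induction k) auto

lemma insert_inst:
  assumes inst: "is_instance W (zimin (Suc k))"
  shows "is_instance (take (length W div 2) W @ [a] @ drop (length W div 2) W) (zimin (Suc k))"
proof -
  obtain f where f: "\<forall>y \<in> set (zimin (Suc k)). f y \<noteq> []"
    and W: "W = concat (map f (zimin (Suc k)))"
    using inst unfolding is_instance_def by blast
  define U where "U = concat (map f (zimin k))"
  define v where "v = f k"
  have v: "v \<noteq> []" using f unfolding v_def by simp
  have WU: "W = U @ v @ U" using W unfolding U_def v_def by simp
  define p where "p = length W div 2"
  have p1: "length U \<le> p" using v unfolding p_def WU by (cases v) auto
  have p2: "p \<le> length U + length v" unfolding p_def WU by simp
  define v' where "v' = take (p - length U) v @ [a] @ drop (p - length U) v"
  define f' where "f' = f(k := v')"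
  have "k \<notin> set (zimin k)" using zimin_set by auto
  hence U': "concat (map f' (zimin k)) = U"
    unfolding U_def f'_def by (intro arg_cong[where f=concat] map_cong) auto
  have eq: "take p W @ [a] @ drop p W = U @ v' @ U"
    unfolding WU v'_def using p1 p2 by auto
  show ?thesis
    unfolding is_instance_def p_def[symmetric] eq
  proof (intro exI[of _ f'] conjI)
    show "\<forall>y\<in>set (zimin (Suc k)). f' y \<noteq> []"
      using f unfolding f'_def v'_def by auto
    show "U @ v' @ U = concat (map f' (zimin (Suc k)))"
      using U' unfolding f'_def by simp
  qed
qed

theorem mainTheorem3:
  fixes q n M :: nat
  assumes "q > 1" and "n > 0" and "M > 0"
  shows "card (C n q (M + 1)) \<ge> q * card (C n q M)"
proof -
  obtain k where n: "n = Suc k" using assms(2) by (cases n) auto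
  define g where "g = (\<lambda>(W::nat list, a::nat). take (M div 2) W @ [a] @ drop (M div 2) W)"
  have inj: "inj_on g (C n q M \<times> {..<q})"
  proof (rule inj_onI)
    fix x y assume x: "x \<in> C n q M \<times> {..<q}" and y: "y \<in> C n q M \<times> {..<q}" and e: "g x = g y"
    obtain W a where xa: "x = (W, a)" by (cases x)
    obtain W' b where yb: "y = (W', b)" by (cases y)
    have l: "length W = M" "length W' = M" using x y xa yb unfolding C_def by auto
    have M2: "M div 2 \<le> M" by simp
    have e': "take (M div 2) W @ [a] @ drop (M div 2) W = take (M div 2) W' @ [b] @ drop (M div 2) W'"
      using e xa yb unfolding g_def by simp
    have lt: "length (take (M div 2) W) = length (take (M div 2) W')" using l by simp
    from e' lt have "take (M div 2) W = take (M div 2) W' \<and> a = b \<and> drop (M div 2) W = drop (M div 2) W'"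
      by (simp add: append_eq_append_conv)
    hence "W = W' \<and> a = b" by (metis append_take_drop_id)
    thus "x = y" using xa yb by simp
  qed
  have sub: "g ` (C n q M \<times> {..<q}) \<subseteq> C n q (M + 1)"
  proof
    fix z assume "z \<in> g ` (C n q M \<times> {..<q})"
    then obtain W a where W: "W \<in> C n q M" and a: "a < q" and z: "z = g (W, a)" by auto
    have lW: "length W = M" and sW: "set W \<subseteq> {..<q}" and iW: "is_instance W (zimin n)"
      using W unfolding C_def by auto
    have "set z \<subseteq> {..<q}"
      using sW a unfolding z g_def by (auto dest: in_set_takeD in_set_dropD)
    moreover have "length z = M + 1" unfolding z g_def using lW by auto
    moreover have "is_instance z (zimin n)"
      using insert_inst[of W k a] iW lW unfolding z g_def n by simp
    ultimately show "z \<in> C n q (M + 1)" unfolding C_def by simp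
  qed
  have fin: "finite (C n q (M + 1))"
  proof (rule finite_subset)
    show "C n q (M + 1) \<subseteq> {xs. set xs \<subseteq> {..<q} \<and> length xs = M + 1}"
      unfolding C_def by auto
    show "finite {xs. set xs \<subseteq> {..<q} \<and> length xs = M + 1}"
      by (rule finite_lists_length_eq) simp
  qed
  have "card (C n q M \<times> {..<q}) \<le> card (C n q (M + 1))"
    using card_inj_on_le[OF inj sub fin] .
  thus ?thesis by (simp add: card_cartesian_product mult.commute)
qed

end
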